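(* Let $\{s_n\}$, $\{t_n\}$ be sequences of positive reals with $s_n\ge t_n\ge2$ and $s_{n+1}\ge s_n+t_n$ for all $n\ge1$. For $n\ge1$ let $\mathcal{D}_n$ be the set of $(\sigma_1,\dots,\sigma_n)\in\mathbb{N}^n$ with $s_k<\sigma_k\le s_k+t_k$ for all $1\le k\le n$, and for $(\sigma_1,\dots,\sigma_n)\in\mathcal{D}_n$ let \[ J_n(\sigma_1,\dots,\sigma_n):=\bigcup_{j\in\mathbb{N},\ s_{n+1}<j\le s_{n+1}+t_{n+1}} \overline{I_{n+1}(\sigma_1,\dots,\sigma_n,j)}. \] Then for any two distinct $(\sigma_1,\dots,\sigma_n),(\sigma'_1,\dots,\sigma'_n)\in\mathcal{D}_n$, the intervals $J_n(\sigma_1,\dots,\sigma_n)$ and $J_n(\sigma'_1,\dots,\sigma'_n)$ are disjoint and separated by a gap of length at least \[ \varepsilon_n:=\frac{1}{2^{n+3}}\cdot\frac{1}{s_1\cdots s_n\, s_n}. \]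
   Context: Engel expansion: define $T:[0,1)\to[0,1)$ by $T(0)=0$ and $T(x)=x\lceil 1/x\rceil-1$ for $x\in(0,1)$. For irrational $x\in(0,1)$ set $d_1(x)=\lceil 1/x\rceil$ and $d_{n+1}(x)=d_1(T^n(x))$. For integers $2\le\sigma_1\le\cdots\le\sigma_m$, the cylinder $I_m(\sigma_1,\dots,\sigma_m)$ is the set of $x\in(0,1)$ with $d_k(x)=\sigma_k$ for $1\le k\le m$; it is the interval $[A_m,B_m)$ with $A_m=\sum_{k=1}^{m}\frac{1}{\sigma_1\cdots\sigma_k}$ and $B_m=\sum_{k=1}^{m-1}\frac{1}{\sigma_1\cdots\sigma_k}+\frac{1}{\sigma_1\cdots\sigma_{m-1}(\sigma_m-1)}$, of length $\frac{1}{\sigma_1\cdots\sigma_m(\sigma_m-1)}$. $\overline{A}$ denotes closure. *)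

theory Defs
  imports "HOL-Analysis.Analysis"
begin

definition engel_T :: "real \<Rightarrow> real" where
  "engel_T x = (if x = 0 then 0 else x * of_int \<lceil>1 / x\<rceil> - 1)"

text \<open>Engel digits, indexed from 1: d_1 x = ceiling(1/x), d_(n+1) x = d_1 (T^n x).\<close>
definition engel_digit :: "nat \<Rightarrow> real \<Rightarrow> int" where
  "engel_digit n x = \<lceil>1 / ((engel_T ^^ (n - 1)) x)\<rceil>"

text \<open>Cylinder I_m(sigma_1,...,sigma_m), the digit list given as a list of length m
  (list position k-1 holds sigma_k).\<close>
definition engel_cyl :: "nat list \<Rightarrow> real set" where
  "engel_cyl \<sigma>s = {x. 0 < x \<and> x < 1 \<and>
      (\<forall>k<length \<sigma>s. engel_digit (Suc k) x = int (\<sigma>s ! k))}"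

definition D_set :: "(nat \<Rightarrow> real) \<Rightarrow> (nat \<Rightarrow> real) \<Rightarrow> nat \<Rightarrow> nat list set" where
  "D_set s t n = {\<sigma>s. length \<sigma>s = n \<and>
      (\<forall>k\<in>{1..n}. s k < real (\<sigma>s ! (k - 1)) \<and> real (\<sigma>s ! (k - 1)) \<le> s k + t k)}"

definition J_set :: "(nat \<Rightarrow> real) \<Rightarrow> (nat \<Rightarrow> real) \<Rightarrow> nat \<Rightarrow> nat list \<Rightarrow> real set" where
  "J_set s t n \<sigma>s = (\<Union>j\<in>{j::nat. s (n + 1) < real j \<and> real j \<le> s (n + 1) + t (n + 1)}.
      closure (engel_cyl (\<sigma>s @ [j])))"

definition eps_gap :: "(nat \<Rightarrow> real) \<Rightarrow> nat \<Rightarrow> real" where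
  "eps_gap s n = 1 / 2 ^ (n + 3) * (1 / ((\<Prod>k=1..n. s k) * s n))"

end

theory Submission
  imports Defs
begin

fun F :: "nat list \<Rightarrow> real \<Rightarrow> real" where
  "F [] c = c" | "F (a#l) c = (1 + F l c) / real a"

fun P :: "nat list \<Rightarrow> real" where
  "P [] = 1" | "P (a#l) = real a * P l"

lemma F_lin: "F l c = F l 0 + c / P l"
  by (induction l) (auto simp: add_divide_distrib divide_divide_eq_left)

lemma F_append: "F (p @ l) c = F p (F l c)"
  by (induction p) auto

lemma P_pos: "\<forall>e\<in>set l. e \<ge> 1 \<Longrightarrow> P l > 0"
  by (induction l) auto

lemma F_mono: assumes "\<forall>e\<in>set l. e \<ge> 1" "c \<le> c'" shows "F l c \<le> F l c'"
proof -
  have "P l > 0" using P_pos assms(1) by blast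
  then have "c / P l \<le> c' / P l" using assms(2) by (simp add: divide_right_mono)
  then show ?thesis by (subst F_lin, subst (2) F_lin) simp
qed

lemma F_nonneg: "\<forall>e\<in>set l. e \<ge> 1 \<Longrightarrow> c \<ge> 0 \<Longrightarrow> F l c \<ge> 0"
  by (induction l) auto

lemma F_geom:
  assumes "d \<ge> 2" "\<forall>e\<in>set l. real e \<ge> d" "0 \<le> c" "c \<le> 1/(d-1)"
  shows "F l c \<le> 1/(d-1)"
  using assms(2)
proof (induction l)
  case Nil
  then show ?case using assms by simp
next
  case (Cons e l)
  then have h: "F l c \<le> 1/(d-1)" "real e \<ge> d" by auto
  have "(1 + F l c) / real e \<le> (1 + 1/(d-1)) / real e"
    using h assms(1) by (intro divide_right_mono) auto
  also have "\<dots> \<le> (1 + 1/(d-1)) / d"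
    using h assms(1) by (intro divide_left_mono) (auto simp: field_simps)
  also have "\<dots> = 1/(d-1)" using assms(1) by (simp add: field_simps)
  finally show ?case by simp
qed

lemma ceil_bounds: "\<lceil>z\<rceil> = int a \<Longrightarrow> real a - 1 < z \<and> z \<le> real a"
  using ceiling_correct[of z] by simp

lemma one_step:
  assumes "\<lceil>1/x\<rceil> = int a" "a \<ge> 2"
  shows "x > 0" "1 / real a \<le> x" "x \<le> 1 / (real a - 1)"
proof -
  have h: "real a - 1 < 1/x" "1/x \<le> real a" using ceil_bounds[OF assms(1)] by auto
  have a1: "real a - 1 \<ge> 1" using assms(2) by simp
  then have "1/x > 0" using h by linarith
  then show xp: "x > 0" by simp
  from h(2) xp show "1 / real a \<le> x" using assms(2) by (simp add: field_simps)
  from h(1) xp a1 show "x \<le> 1 / (real a - 1)" by (simp add: field_simps)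
qed

lemma cyl_bounds:
  assumes "\<forall>e\<in>set \<sigma>s. e \<ge> 2" "j \<ge> 2"
    "\<forall>i<Suc (length \<sigma>s). \<lceil>1 / (engel_T ^^ i) x\<rceil> = int ((\<sigma>s @ [j]) ! i)"
  shows "F \<sigma>s (1 / real j) \<le> x \<and> x \<le> F \<sigma>s (1 / (real j - 1))"
  using assms
proof (induction \<sigma>s arbitrary: x)
  case Nil
  then have h: "\<lceil>1/x\<rceil> = int j" by (metis funpow_0 length_0_conv nth_Cons_0 append_Nil zero_less_Suc)
  show ?case using one_step[OF h Nil(2)] by simp
next
  case (Cons a \<sigma>s)
  have h: "\<lceil>1/x\<rceil> = int a" using Cons.prems(3) by (metis funpow_0 nth_Cons_0 append_Cons zero_less_Suc)
  have a2: "a \<ge> 2" using Cons.prems(1) by simp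
  note os = one_step[OF h a2]
  define y where "y = engel_T x"
  have y: "y = x * real a - 1" using os(1) h unfolding y_def engel_T_def by simp
  have "\<forall>i<Suc (length \<sigma>s). \<lceil>1 / (engel_T ^^ i) y\<rceil> = int ((\<sigma>s @ [j]) ! i)"
  proof (intro allI impI)
    fix i assume "i < Suc (length \<sigma>s)"
    then have "\<lceil>1 / (engel_T ^^ Suc i) x\<rceil> = int (((a#\<sigma>s) @ [j]) ! Suc i)"
      using Cons.prems(3) by (metis Suc_less_eq length_Cons length_append_singleton)
    then show "\<lceil>1 / (engel_T ^^ i) y\<rceil> = int ((\<sigma>s @ [j]) ! i)"
      unfolding y_def by (simp only: funpow_Suc_right o_apply) simp
  qed
  then have ih: "F \<sigma>s (1 / real j) \<le> y \<and> y \<le> F \<sigma>s (1 / (real j - 1))"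
    using Cons by auto
  have xe: "x = (1 + y) / real a" using y a2 by (simp add: field_simps)
  have ap: "real a > 0" using a2 by simp
  show ?case unfolding xe using ih ap by (auto intro: divide_right_mono)
qed

lemma core1:
  fixes a b j :: nat and S qN M :: real
  assumes "a < b" "1 \<le> a" "real b \<le> 2 * S" "real b \<le> qN" "qN < real j" "M \<le> 2 * qN" "real j \<le> M"
  shows "(1+1/M)/real a - (1+1/(real j - 1))/real b \<ge> 1/(16 * S * S)"
proof -
  have bj: "b < j" using assms(4,5) by simp
  define c where "c = 1/(real j - 1)"
  have jb: "real j - 1 \<ge> real a + 1" using bj assms(1) by linarith
  have a0: "real a > 0" using assms(2) by simp
  have c0: "c > 0" using jb a0 unfolding c_def by simp
  have Mp: "M > 0" using assms(5,7) bj by linarith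
  have "(1+c)/real b \<le> (1+c)/(real a + 1)"
    using c0 assms(1) a0 by (intro divide_left_mono) auto
  define N where "N = 1 + (real a+1)/M - real a*c"
  have eq: "(1+1/M)/real a - (1+c)/(real a + 1) = N/(real a*(real a+1))"
    unfolding N_def using a0 Mp by (simp add: field_simps)
  have ac1: "real a * c \<le> real a/(real a+1)" unfolding c_def using jb a0
    by (simp add: frac_le divide_left_mono)
  have "real a/(real a+1) \<le> 1" by simp
  have N4: "N \<ge> 1/4"
  proof (cases "real j - 1 \<ge> 2 * real a")
    case True
    then have "real a * c \<le> 1/2" unfolding c_def using a0 by (simp add: field_simps)
    moreover have "(real a+1)/M \<ge> 0" using Mp by simp
    ultimately show ?thesis unfolding N_def by linarith
  next
    case False
    then have "M < 4*real a + 2" using assms(5,6) by linarith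
    then have "(real a+1)/M > 1/4" using Mp by (simp add: field_simps)
    moreover have "real a * c \<le> 1" using ac1 \<open>real a/(real a+1) \<le> 1\<close> by linarith
    ultimately show ?thesis unfolding N_def by linarith
  qed
  have "N/(real a*(real a+1)) \<ge> (1/4)/(real a*(real a+1))"
    using N4 a0 by (intro divide_right_mono) auto
  moreover have "real a*(real a+1) \<le> (2 * S)*(2 * S)"
    using assms(1,3) a0 by (intro mult_mono) auto
  then have "1/(16 * S * S) \<le> 1/(4*(real a*(real a+1)))"
    using a0 by (intro frac_le) auto
  then have "(1/4)/(real a*(real a+1)) \<ge> 1/(16 * S * S)"
    by simp
  ultimately show ?thesis using eq \<open>(1+c)/real b \<le> (1+c)/(real a + 1)\<close> unfolding c_def by linarith
qed

lemma core2:
  fixes a b :: nat and u v q1 q2 qn :: real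
  assumes "a < b" "1 \<le> a" "u \<ge> 0" "0 \<le> v" "v \<le> 1/(real a + 1)"
    "real a \<le> 2 * q1" "real a + 1 \<le> 2 * q2" "real a + 1 \<le> qn"
  shows "(1+u)/real a - (1+v)/real b \<ge> 1/(16 * q1 * q2 * qn)"
proof -
  have a0: "real a > 0" using assms(2) by simp
  have "(1+u)/real a \<ge> 1/real a" using a0 assms(3) by (simp add: divide_right_mono)
  have "(1+v)/real b \<le> (1 + 1/(real a+1))/real b" using assms(5) a0 by (simp add: divide_right_mono)
  also have "\<dots> \<le> (1 + 1/(real a+1))/(real a + 1)" using assms(1) a0
    by (intro divide_left_mono) (auto simp: add_pos_pos)
  finally have hb: "(1+v)/real b \<le> (1 + 1/(real a+1))/(real a + 1)" .
  have e1: "(1 + 1/(real a+1))/(real a + 1) = (real a + 2)/((real a+1)*(real a+1))"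
    using a0 by (simp add: field_simps)
  have e2: "1/real a - (real a + 2)/((real a+1)*(real a+1)) = 1/(real a*(real a+1)*(real a+1))"
    using a0 by (simp add: divide_simps) (simp add: algebra_simps)
  have eq: "1/real a - (1 + 1/(real a+1))/(real a + 1) = 1/(real a*(real a+1)*(real a+1))"
    using e1 e2 by simp
  have "real a*(real a+1)*(real a+1) \<le> (2 * q1)*(2 * q2)*(2 * qn)"
    using assms a0 by (intro mult_mono) auto
  moreover have "real a*(real a+1)*(real a+1) > 0" using a0 by simp
  ultimately have "real a*(real a+1)*(real a+1) \<le> 16 * q1 * q2 * qn" by linarith
  then have "1/(real a*(real a+1)*(real a+1)) \<ge> 1/(16 * q1 * q2 * qn)"
    using a0 by (intro frac_le) auto
  then show ?thesis using eq hb \<open>(1+u)/real a \<ge> 1/real a\<close> by linarith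
qed

lemma prod_split: "(\<Prod>i<m+q. f i) = (\<Prod>i<m. f i) * (\<Prod>i<q. f (m+i))" for f :: "nat \<Rightarrow> real"
  by (induction q) (auto simp: mult.assoc)

lemma P_bound: "(\<forall>i<length l. real (l!i) \<le> g i) \<Longrightarrow> P l \<le> (\<Prod>i<length l. g i)"
proof (induction l arbitrary: g)
  case Nil then show ?case by simp
next
  case (Cons a l)
  have "\<forall>i<length l. real (l!i) \<le> g (Suc i)"
  proof (intro allI impI)
    fix i assume "i < length l"
    then show "real (l!i) \<le> g (Suc i)" using Cons.prems[rule_format, of "Suc i"] by simp
  qed
  then have "P l \<le> (\<Prod>i<length l. g (Suc i))" using Cons.IH[of "\<lambda>i. g (Suc i)"] by simp
  moreover have "P l \<ge> 0" by (induction l) auto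
  moreover have "real a \<le> g 0" using Cons.prems by fastforce
  ultimately have "real a * P l \<le> g 0 * (\<Prod>i<length l. g (Suc i))"
    by (intro mult_mono) auto
  then show ?case by (simp only: P.simps length_Cons prod.lessThan_Suc_shift)
qed

context
  fixes s t :: "nat \<Rightarrow> real"
  assumes A1: "\<And>k. k \<ge> 1 \<Longrightarrow> s k > 0 \<and> t k > 0"
    and A2: "\<And>k. k \<ge> 1 \<Longrightarrow> s k \<ge> t k \<and> t k \<ge> 2"
    and A3: "\<And>k. k \<ge> 1 \<Longrightarrow> s (k + 1) \<ge> s k + t k"
begin

lemma s_mono: assumes "1 \<le> k" "k \<le> l" shows "s k \<le> s l"
  using assms(2)
proof (induction l rule: dec_induct)
  case base then show ?case by simp
next
  case (step l) then show ?case using A3[of l] A2[of l] assms(1) by simp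
qed

lemma s_mono2: "1 \<le> k \<Longrightarrow> k < l \<Longrightarrow> s k + t k \<le> s l"
  using A3[of k] s_mono[of "k+1" l] by simp

lemma D_nth: assumes "\<sigma> \<in> D_set s t n" "k < n"
  shows "s (Suc k) < real (\<sigma>!k) \<and> real (\<sigma>!k) \<le> s (Suc k) + t (Suc k)"
  using assms unfolding D_set_def by (auto dest!: bspec[of _ _ "Suc k"])

lemma D_len: "\<sigma> \<in> D_set s t n \<Longrightarrow> length \<sigma> = n"
  unfolding D_set_def by simp

lemma D_ge2: assumes "\<sigma> \<in> D_set s t n" shows "\<forall>e\<in>set \<sigma>. e \<ge> 2"
proof
  fix e assume "e \<in> set \<sigma>"
  then obtain k where k: "k < length \<sigma>" "\<sigma>!k = e" by (auto simp: in_set_conv_nth)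
  have "s (Suc k) < real e" using D_nth[OF assms, of k] k D_len[OF assms] by simp
  moreover have "s (Suc k) \<ge> 2" using A2[of "Suc k"] by simp
  ultimately show "e \<ge> 2" by simp
qed

lemma J_bounds:
  assumes "\<sigma> \<in> D_set s t n" "x \<in> J_set s t n \<sigma>"
  shows "\<exists>j::nat. s(n+1) < real j \<and> real j \<le> s(n+1)+t(n+1) \<and>
           F \<sigma> (1/real j) \<le> x \<and> x \<le> F \<sigma> (1/(real j - 1))"
proof -
  from assms(2) obtain j :: nat where j: "s(n+1) < real j" "real j \<le> s(n+1)+t(n+1)"
    "x \<in> closure (engel_cyl (\<sigma>@[j]))" unfolding J_set_def by auto
  have g2: "\<forall>e\<in>set \<sigma>. e \<ge> 2" by (rule D_ge2[OF assms(1)])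
  have j2: "j \<ge> 2" using j(1) A2[of "n+1"] by simp
  have "engel_cyl (\<sigma>@[j]) \<subseteq> {F \<sigma> (1/real j) .. F \<sigma> (1/(real j - 1))}"
  proof
    fix z assume "z \<in> engel_cyl (\<sigma>@[j])"
    then have "\<forall>i<Suc (length \<sigma>). \<lceil>1 / (engel_T ^^ i) z\<rceil> = int ((\<sigma> @ [j]) ! i)"
      unfolding engel_cyl_def engel_digit_def by auto
    from cyl_bounds[OF g2 j2 this] show "z \<in> {F \<sigma> (1/real j) .. F \<sigma> (1/(real j - 1))}" by simp
  qed
  then have "closure (engel_cyl (\<sigma>@[j])) \<subseteq> {F \<sigma> (1/real j) .. F \<sigma> (1/(real j - 1))}"
    by (intro closure_minimal) auto
  then have "F \<sigma> (1/real j) \<le> x \<and> x \<le> F \<sigma> (1/(real j - 1))" using j(3) by auto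
  then show ?thesis using j(1,2) by blast
qed

lemma gap_ordered:
  assumes sig: "\<sigma> = p @ a # r" and sig': "\<sigma>' = p @ b # r'" and len: "length r' = length r"
    and ab: "a < b"
    and D1: "\<sigma> \<in> D_set s t n" and D2: "\<sigma>' \<in> D_set s t n"
    and xJ: "x \<in> J_set s t n \<sigma>" and yJ: "y \<in> J_set s t n \<sigma>'"
  shows "x - y \<ge> eps_gap s n"
proof -
  define m where "m = length p"
  define L where "L = length r"
  have n: "n = m + Suc L" using D_len[OF D1] sig m_def L_def by simp
  have g2: "\<forall>e\<in>set \<sigma>. e \<ge> 2" by (rule D_ge2[OF D1])
  have g2': "\<forall>e\<in>set \<sigma>'. e \<ge> 2" by (rule D_ge2[OF D2])
  have g1: "\<forall>e\<in>set \<sigma>. e \<ge> 1" using g2 by auto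
  have g1': "\<forall>e\<in>set \<sigma>'. e \<ge> 1" using g2' by auto
  have gp: "\<forall>e\<in>set p. e \<ge> 1" using g1 sig by auto
  have gar: "\<forall>e\<in>set (a#r). e \<ge> 1" using g1 sig by auto
  have gr: "\<forall>e\<in>set r. e \<ge> 1" using g1 sig by auto
  have a1: "a \<ge> 1" using g1 sig by auto
  have sig_m: "\<sigma>!m = a" "\<sigma>'!m = b" by (simp_all add: sig sig' m_def nth_append)
  have sig_r: "\<sigma>'!(m+Suc i) = r'!i" for i
    using nth_append_length_plus[of p "b#r'" "Suc i"] by (simp add: sig' m_def)
  have sig_p: "i < m \<Longrightarrow> \<sigma>!i = p!i" for i by (simp add: sig m_def nth_append)
  have dma: "s (Suc m) < real a" "real a \<le> s (Suc m) + t (Suc m)"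
    using D_nth[OF D1, of m] sig_m n by auto
  have dmb: "s (Suc m) < real b" "real b \<le> s (Suc m) + t (Suc m)"
    using D_nth[OF D2, of m] sig_m n by auto
  define M where "M = s(n+1) + t(n+1)"
  obtain jx :: nat where jx: "s(n+1) < real jx" "real jx \<le> M" "F \<sigma> (1/real jx) \<le> x"
    using J_bounds[OF D1 xJ] M_def by auto
  obtain j :: nat where j: "s(n+1) < real j" "real j \<le> M" "y \<le> F \<sigma>' (1/(real j - 1))"
    using J_bounds[OF D2 yJ] M_def by auto
  have sn1: "s(n+1) \<ge> 2" "t(n+1) \<le> s(n+1)" using A2[of "n+1"] by auto
  have jxp: "real jx > 0" using jx sn1 by linarith
  have "1/M \<le> 1/real jx" using jxp jx(2) by (simp add: frac_le)
  then have "F \<sigma> (1/M) \<le> F \<sigma> (1/real jx)" using F_mono[OF g1] by blast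
  with jx have xlo: "F \<sigma> (1/M) \<le> x" by linarith
  define c' where "c' = 1/(real j - 1)"
  define D where "D = F (a#r) (1/M) - F (b#r') c'"
  have Pp: "P p > 0" using P_pos[OF gp] .
  have Fs: "F \<sigma> (1/M) = F p 0 + F (a#r) (1/M) / P p"
    unfolding sig F_append by (rule F_lin)
  have Fs': "F \<sigma>' c' = F p 0 + F (b#r') c' / P p"
    unfolding sig' F_append by (rule F_lin)
  have xy: "x - y \<ge> D / P p"
  proof -
    have "D / P p = F (a#r) (1/M) / P p - F (b#r') c' / P p"
      unfolding D_def by (simp add: diff_divide_distrib)
    then show ?thesis using Fs Fs' xlo j(3) unfolding c'_def by linarith
  qed
  define R where "R = (\<Prod>i<m. s(Suc i))"
  define Q where "Q = (\<Prod>i<Suc L. s(Suc(m+i)))"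
  have prodn: "(\<Prod>k=1..n. s k) = R * Q"
  proof -
    have "(\<Prod>k=1..n. s k) = (\<Prod>i<n. s (Suc i))" by (simp add: prod.atLeast1_atMost_eq)
    also have "\<dots> = R * Q" unfolding n R_def Q_def by (rule prod_split)
    finally show ?thesis .
  qed
  have Rp: "R > 0" unfolding R_def using A1 by (intro prod_pos) auto
  have Qp: "Q > 0" unfolding Q_def using A1 by (intro prod_pos) auto
  have snp: "s n > 0" using A1[of n] n by simp
  have PpR: "P p \<le> 2^m * R"
  proof -
    have "\<forall>i<length p. real (p!i) \<le> 2 * s (Suc i)"
    proof (intro allI impI)
      fix i assume i: "i < length p"
      then have "real (\<sigma>!i) \<le> s (Suc i) + t (Suc i)" using D_nth[OF D1, of i] n m_def by simp
      moreover have "t (Suc i) \<le> s (Suc i)" using A2[of "Suc i"] by simp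
      ultimately show "real (p!i) \<le> 2 * s (Suc i)" using sig_p[of i] i m_def by simp
    qed
    from P_bound[OF this] show ?thesis
      unfolding R_def m_def by (simp add: prod.distrib)
  qed
  have DQ: "D \<ge> 1/(16 * Q * s n)"
  proof (cases "L = 0")
    case True
    then have rr: "r = []" "r' = []" using L_def len by auto
    have nm: "n = Suc m" using n True by simp
    have Qe: "Q = s n" unfolding Q_def using True nm by simp
    have "D = (1+1/M)/real a - (1+1/(real j - 1))/real b" unfolding D_def c'_def rr by simp
    moreover have "(1+1/M)/real a - (1+1/(real j - 1))/real b \<ge> 1/(16 * s n * s n)"
    proof (rule core1[OF ab a1])
      show "real b \<le> 2 * s n" using dmb A2[of "Suc m"] nm by simp
      show "real b \<le> s (n+1)" using dmb s_mono2[of n "n+1"] nm by simp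
      show "s (n+1) < real j" by (rule j(1))
      show "M \<le> 2 * s (n+1)" using sn1 M_def by simp
      show "real j \<le> M" by (rule j(2))
    qed
    ultimately show ?thesis using Qe by (simp add: mult.assoc)
  next
    case False
    then obtain L' where L': "L = Suc L'" by (cases L) auto
    have m2n: "m + 2 \<le> n" using n L' by simp
    have sm2: "s (Suc m) + t (Suc m) \<le> s (m+2)" using s_mono2[of "Suc m" "m+2"] by simp
    have bs2: "real b \<le> s (m+2)" using dmb sm2 by simp
    have u0: "F r (1/M) \<ge> 0" using F_nonneg[OF gr, of "1/M"] sn1 M_def A2[of "n+1"] by simp
    have jb: "real j > real b" using j(1) bs2 s_mono[of "m+2" "n+1"] m2n by simp
    then have "b < j" by simp
    then have ja: "real j - 1 \<ge> real a + 1" using ab by linarith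
    have c0: "c' \<ge> 0" "c' \<le> 1/(real a + 1)" unfolding c'_def using ja a1 by (auto simp: frac_le)
    have er: "\<forall>e\<in>set r'. real e \<ge> real a + 2"
    proof
      fix e assume "e \<in> set r'"
      then obtain i where i: "i < L" "r'!i = e" using len L_def by (auto simp: in_set_conv_nth)
      have "s (Suc (m + Suc i)) < real (\<sigma>'!(m + Suc i))" using D_nth[OF D2, of "m + Suc i"] n i by simp
      moreover have "s (m+2) \<le> s (Suc (m + Suc i))" using s_mono[of "m+2" "Suc (m + Suc i)"] by simp
      ultimately have "real b < real e" using bs2 sig_r[of i] i by simp
      then show "real e \<ge> real a + 2" using ab by simp
    qed
    have v: "F r' c' \<le> 1/(real a + 2 - 1)"
      by (rule F_geom) (use er c0 a1 in \<open>auto simp: add.commute\<close>)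
    have "D = (1 + F r (1/M))/real a - (1 + F r' c')/real b" unfolding D_def by simp
    moreover have "(1 + F r (1/M))/real a - (1 + F r' c')/real b \<ge> 1/(16 * s (Suc m) * s (m+2) * s n)"
    proof (rule core2[OF ab a1 u0])
      show "0 \<le> F r' c'" using F_nonneg[of r' c'] g1' sig' c0 by auto
      show "F r' c' \<le> 1/(real a + 1)" using v by (simp add: add.commute)
      show "real a \<le> 2 * s (Suc m)" using dma A2[of "Suc m"] by simp
      show "real a + 1 \<le> 2 * s (m+2)" using ab bs2 A1[of "m+2"] by simp
      show "real a + 1 \<le> s n" using ab bs2 s_mono[of "m+2" n] m2n by simp
    qed
    moreover have "s (Suc m) * s (m+2) \<le> Q"
    proof -
      have "Q = s (Suc m) * (\<Prod>i<L. s (Suc (Suc (m+i))))"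
        unfolding Q_def by (subst prod.lessThan_Suc_shift) simp
      also have "(\<Prod>i<L. s (Suc (Suc (m+i)))) = s (m+2) * (\<Prod>i<L'. s (Suc (Suc (m+Suc i))))"
        unfolding L' by (subst prod.lessThan_Suc_shift) simp
      finally have Qe: "Q = s (Suc m) * (s (m+2) * (\<Prod>i<L'. s (Suc (Suc (m+Suc i)))))" .
      have "(\<Prod>i<L'. s (Suc (Suc (m+Suc i)))) \<ge> 1"
        proof (intro prod_ge_1)
        fix i show "1 \<le> s (Suc (Suc (m+Suc i)))" using A2[of "Suc (Suc (m+Suc i))"] by simp
      qed
      moreover have "s (Suc m) > 0" "s (m+2) > 0" using A1 by auto
      ultimately show ?thesis unfolding Qe
        by (simp add: mult_le_cancel_left1 mult.assoc)
    qed
    then have "1/(16 * Q * s n) \<le> 1/(16 * s (Suc m) * s (m+2) * s n)"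
      using A1[of "Suc m"] A1[of "m+2"] snp
      by (intro frac_le) (auto intro!: mult_pos_pos mult_right_mono simp: mult.assoc)
    ultimately show ?thesis by linarith
  qed
  have D0: "D \<ge> 0" using DQ Qp snp by (smt (verit) divide_nonneg_pos mult_pos_pos)
  have "D / P p \<ge> D / (2^m * R)" using D0 Pp PpR by (intro divide_left_mono) auto
  moreover have "D / (2^m * R) \<ge> (1/(16 * Q * s n)) / (2^m * R)"
    using DQ Rp by (intro divide_right_mono) auto
  moreover have "(1/(16 * Q * s n)) / (2^m * R) = 1 / (2^(m+4) * (R*Q * s n))"
    by (simp add: power_add field_simps)
  moreover have "eps_gap s n = 1 / (2^(n+3) * (R*Q * s n))"
    unfolding eps_gap_def prodn by simp
  moreover have "1 / (2^(n+3) * (R*Q * s n)) \<le> 1 / (2^(m+4) * (R*Q * s n))"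
  proof (rule frac_le)
    show "0 < 2^(m+4) * (R*Q * s n)" using Rp Qp snp by simp
    have "(2::real)^(m+4) \<le> 2^(n+3)" using n by (intro power_increasing) auto
    then show "2^(m+4) * (R*Q * s n) \<le> 2^(n+3) * (R*Q * s n)"
      using Rp Qp snp by (intro mult_right_mono) auto
  qed auto
  ultimately show ?thesis using xy by linarith
qed

end
lemma list_diff_decomp:
  "length xs = length ys \<Longrightarrow> xs \<noteq> ys \<Longrightarrow>
   \<exists>p a b r r'. xs = p @ a # r \<and> ys = p @ b # r' \<and> length r' = length r \<and> a \<noteq> b"
proof (induction xs arbitrary: ys)
  case Nil then show ?case by simp
next
  case (Cons x xs)
  then obtain y ys' where ys: "ys = y # ys'" by (cases ys) auto
  show ?case
  proof (cases "x = y")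
    case True
    then have "length xs = length ys'" "xs \<noteq> ys'" using Cons.prems ys by auto
    then obtain p a b r r' where "xs = p @ a # r" "ys' = p @ b # r'" "length r' = length r" "a \<noteq> b"
      using Cons.IH by blast
    then show ?thesis using ys True by (intro exI[of _ "x#p"]) auto
  next
    case False
    then show ?thesis using ys Cons.prems by (intro exI[of _ "[]"]) auto
  qed
qed

theorem mainTheorem3:
  fixes s t :: "nat \<Rightarrow> real" and n :: nat and \<sigma>s \<sigma>s' :: "nat list"
  assumes "\<And>k. k \<ge> 1 \<Longrightarrow> s k > 0 \<and> t k > 0"
    and "\<And>k. k \<ge> 1 \<Longrightarrow> s k \<ge> t k \<and> t k \<ge> 2"
    and "\<And>k. k \<ge> 1 \<Longrightarrow> s (k + 1) \<ge> s k + t k"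
    and "n \<ge> 1"
    and "\<sigma>s \<in> D_set s t n" and "\<sigma>s' \<in> D_set s t n" and "\<sigma>s \<noteq> \<sigma>s'"
  shows "J_set s t n \<sigma>s \<inter> J_set s t n \<sigma>s' = {} \<and>
         (\<forall>x\<in>J_set s t n \<sigma>s. \<forall>y\<in>J_set s t n \<sigma>s'. \<bar>x - y\<bar> \<ge> eps_gap s n)"
proof -
  have len: "length \<sigma>s = length \<sigma>s'" using assms(5,6) unfolding D_set_def by simp
  obtain p a b r r' where d: "\<sigma>s = p @ a # r" "\<sigma>s' = p @ b # r'" "length r' = length r" "a \<noteq> b"
    using list_diff_decomp[OF len assms(7)] by blast
  have epos: "eps_gap s n > 0"
  proof -
    have "(\<Prod>k=1..n. s k) > 0" using assms(1) by (intro prod_pos) auto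
    moreover have "s n > 0" using assms(1,4) by simp
    ultimately show ?thesis unfolding eps_gap_def by simp
  qed
  have gap: "\<forall>x\<in>J_set s t n \<sigma>s. \<forall>y\<in>J_set s t n \<sigma>s'. \<bar>x - y\<bar> \<ge> eps_gap s n"
  proof (intro ballI)
    fix x y assume x: "x \<in> J_set s t n \<sigma>s" and y: "y \<in> J_set s t n \<sigma>s'"
    show "\<bar>x - y\<bar> \<ge> eps_gap s n"
    proof (cases "a < b")
      case True
      have "x - y \<ge> eps_gap s n"
        using gap_ordered[OF assms(1-3) d(1,2,3) True assms(5,6) x y] .
      then show ?thesis by linarith
    next
      case False
      then have ba: "b < a" using d(4) by simp
      have "y - x \<ge> eps_gap s n"
        using gap_ordered[OF assms(1-3) d(2,1) d(3)[symmetric] ba assms(6,5) y x] .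
      then show ?thesis by linarith
    qed
  qed
  have "J_set s t n \<sigma>s \<inter> J_set s t n \<sigma>s' = {}"
  proof (rule ccontr)
    assume "J_set s t n \<sigma>s \<inter> J_set s t n \<sigma>s' \<noteq> {}"
    then obtain z where "z \<in> J_set s t n \<sigma>s" "z \<in> J_set s t n \<sigma>s'" by blast
    then have "\<bar>z - z\<bar> \<ge> eps_gap s n" using gap by blast
    then show False using epos by simp
  qed
  with gap show ?thesis by blast
qed

end
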